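(* Let $C$ and $\alpha$ be as in the construction in the context. For every finite set $F\subset C$, every $\varepsilon>0$ and every $N\in\mathbb{N}$ there exist $m\ge N$ (which can be taken to be a power of $2$) and projections $p_0,\dots,p_{m-1}\in C$ such that $\sum_{k=0}^{m-1}p_k = 1$, $\|\alpha(p_k) - p_{k+1}\| < \varepsilon$ for all $k$ (indices modulo $m$), and $\|[p_k,a]\| < \varepsilon$ for all $k$ and all $a\in F$. In particular $\alpha$ has the Rokhlin property.
   Context: Construction. Let $(d(n))_{n\ge 0}$ be natural numbers with $d(0)=1$ and $d(n) > 2^{n-1}$ for $n \ge 1$. Put $l(0)=1$, $l(n) = d(n) + 2^{n-1}$ for $n\ge1$, $r(n) = \prod_{j=0}^n l(j)$, $s(n) = \prod_{j=0}^n d(j)$, and $\kappa = \inf_{n\in\mathbb{N}} s(n)/r(n)$; assume $\kappa > 1/2$ (e.g. $d(n)=10^n$). Let $X_n = (S^2)^{s(n)}$, identified with $X_{n+1} = X_n^{d(n+1)}$, and let $P^{(n)}_j\colon X_{n+1}\to X_n$ ($1\le j\le d(n+1)$) be the $j$-th coordinate projection. Choose points $x_m \in X_m$ ($m\ge 0$) such that for every $n\ge 0$ the set of points $(P^{(n)}_{\nu_1}\circ P^{(n+1)}_{\nu_2}\circ\cdots\circ P^{(m-1)}_{\nu_{m-n}})(x_m)$, over all $m>n$ and all $\nu_j \in \{1,\dots,d(n+j)\}$, is dense in $X_n$. Let $\mathbb{Z}_{2^n} = \mathbb{Z}/2^n\mathbb{Z}$, $\pi_{n,n+1}\colon \mathbb{Z}_{2^{n+1}}\to\mathbb{Z}_{2^n}$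 the reduction mod $2^n$. Set $C_n = M_{r(n)} \otimes C(X_n \times \mathbb{Z}_{2^n}) \cong C(X_n\times\mathbb{Z}_{2^n}, M_{r(n)})$, identifying $M_{r(n)} = M_{l(1)}\otimes\cdots\otimes M_{l(n)}$. Define $S_{n,1},\dots,S_{n,l(n+1)}\colon X_{n+1}\times\mathbb{Z}_{2^{n+1}} \to X_n\times \mathbb{Z}_{2^n}$ by $S_{n,j}(x,k) = (P^{(n)}_j(x), \pi_{n,n+1}(k))$ for $1\le j\le d(n+1)$, and $S_{n,d(n+1)+1+j}(x,k) = (x_n, j)$ for $j = 0,1,\dots,2^n-1$. Let $\gamma_n\colon C(X_n\times\mathbb{Z}_{2^n}) \to M_{l(n+1)}(C(X_{n+1}\times\mathbb{Z}_{2^{n+1}}))$, $\gamma_n(f) = \operatorname{diag}(f\circ S_{n,1},\dots,f\circ S_{n,l(n+1)})$, and $\Gamma_{n+1,n} = \mathrm{id}_{M_{r(n)}}\otimes\gamma_n\colon C_n\to C_{n+1}$; $\Gamma_{n,m}$ denote the composites and $C = \varinjlim C_n$ with canonical maps $\Gamma_{\infty,m}\colon C_m\to C$. For $n\ge1$ let $v_n\in M_{l(n)}$ be the unitary $v_n = \sum_{j=1}^{d(n)} e_{j,j} + \sum_{j=1}^{2^{n-1}-1} e_{d(n)+j,\,d(n)+j+1} + e_{d(n)+2^{n-1},\,d(n)+1}$ (identity on the first $d(n)$ coordinates, cyclic permutation of the last $2^{n-1}$), let $u_n = v_1\otimes\cdots\otimes v_n \in M_{r(n)}$ ($u_0=1$),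 and define automorphisms $\alpha_n$ of $C_n$ by $\alpha_n(f)(x,k) = u_n f(x, k+1) u_n^*$. These satisfy $\alpha_{n+1}\circ\Gamma_{n+1,n} = \Gamma_{n+1,n}\circ\alpha_n$, and $\alpha$ denotes the induced automorphism of $C$. *)

theory Defs
  imports "HOL-Analysis.Analysis"
begin

text \<open>Points of X_n x Z_(2^n): X_n = (S^2)^(s n) is modelled as the set of
  x :: nat => real^3 with x i on the unit sphere for i < s n and x i = 0 otherwise
  (product topology); Z_(2^n) is modelled as {0..<2^n} (discrete topology of nat).\<close>
type_synonym pt = "(nat \<Rightarrow> real^3) \<times> nat"
text \<open>An element of C_n = C(X_n x Z_(2^n), M_(r n)): entries indexed by i, j < r n.\<close>
type_synonym cfun = "pt \<Rightarrow> nat \<Rightarrow> nat \<Rightarrow> complex"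
text \<open>An element of the algebraic inductive limit: a level n and an element of C_n.\<close>
type_synonym lelt = "nat \<times> cfun"
text \<open>An element of C (completion): a Cauchy sequence of elements of the algebraic limit.\<close>
type_synonym celt = "nat \<Rightarrow> lelt"

definition sS :: "(nat \<Rightarrow> nat) \<Rightarrow> nat \<Rightarrow> nat" where
  "sS d n = (\<Prod>j\<le>n. d j)"

definition lL :: "(nat \<Rightarrow> nat) \<Rightarrow> nat \<Rightarrow> nat" where
  "lL d n = (if n = 0 then 1 else d n + 2 ^ (n - 1))"

definition rR :: "(nat \<Rightarrow> nat) \<Rightarrow> nat \<Rightarrow> nat" where
  "rR d n = (\<Prod>j\<le>n. lL d j)"

definition kappa :: "(nat \<Rightarrow> nat) \<Rightarrow> real" where
  "kappa d = (INF n. real (sS d n) / real (rR d n))"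

definition Xsp :: "(nat \<Rightarrow> nat) \<Rightarrow> nat \<Rightarrow> (nat \<Rightarrow> real^3) set" where
  "Xsp d n = {x. (\<forall>i < sS d n. x i \<in> sphere 0 1) \<and> (\<forall>i. sS d n \<le> i \<longrightarrow> x i = 0)}"

definition Zn :: "nat \<Rightarrow> nat set" where
  "Zn n = {..<(2::nat) ^ n}"

text \<open>j-th coordinate projection X_(n+1) = X_n^(d(n+1)) -> X_n, 1 \<le> j \<le> d(n+1);
  the j-th factor occupies the block of coordinates (j-1) s(n) .. j s(n) - 1.\<close>
definition proj :: "(nat \<Rightarrow> nat) \<Rightarrow> nat \<Rightarrow> nat \<Rightarrow> (nat \<Rightarrow> real^3) \<Rightarrow> (nat \<Rightarrow> real^3)" where
  "proj d n j x = (\<lambda>i. if i < sS d n then x ((j - 1) * sS d n + i) else 0)"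

text \<open>iterK d n k nu x = (P^(n)_(nu 1) o P^(n+1)_(nu 2) o ... o P^(n+k-1)_(nu k)) x\<close>
primrec iterK :: "(nat \<Rightarrow> nat) \<Rightarrow> nat \<Rightarrow> nat \<Rightarrow> (nat \<Rightarrow> nat) \<Rightarrow> (nat \<Rightarrow> real^3) \<Rightarrow> (nat \<Rightarrow> real^3)" where
  "iterK d n 0 nu x = x"
| "iterK d n (Suc k) nu x = iterK d n k nu (proj d (n + k) (nu (Suc k)) x)"

definition Smap :: "(nat \<Rightarrow> nat) \<Rightarrow> (nat \<Rightarrow> (nat \<Rightarrow> real^3)) \<Rightarrow> nat \<Rightarrow> nat \<Rightarrow> pt \<Rightarrow> pt" where
  "Smap d xs n j p =
     (if j \<le> d (Suc n) then (proj d n j (fst p), snd p mod 2 ^ n)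
      else (xs n, j - d (Suc n) - 1))"

definition mmul :: "nat \<Rightarrow> (nat \<Rightarrow> nat \<Rightarrow> complex) \<Rightarrow> (nat \<Rightarrow> nat \<Rightarrow> complex) \<Rightarrow> (nat \<Rightarrow> nat \<Rightarrow> complex)" where
  "mmul r A B = (\<lambda>i j. \<Sum>l<r. A i l * B l j)"

definition madj :: "(nat \<Rightarrow> nat \<Rightarrow> complex) \<Rightarrow> (nat \<Rightarrow> nat \<Rightarrow> complex)" where
  "madj A = (\<lambda>i j. cnj (A j i))"

definition vnorm :: "nat \<Rightarrow> (nat \<Rightarrow> complex) \<Rightarrow> real" where
  "vnorm r v = sqrt (\<Sum>i<r. (cmod (v i))\<^sup>2)"

definition opnorm :: "nat \<Rightarrow> (nat \<Rightarrow> nat \<Rightarrow> complex) \<Rightarrow> real" where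
  "opnorm r A = Sup {vnorm r (\<lambda>i. \<Sum>j<r. A i j * v j) | v. vnorm r v \<le> 1}"

text \<open>v_n (n \<ge> 1), 0-indexed: identity on the first d(n) coordinates,
  cyclic permutation of the last 2^(n-1).\<close>
definition vmat :: "(nat \<Rightarrow> nat) \<Rightarrow> nat \<Rightarrow> nat \<Rightarrow> nat \<Rightarrow> complex" where
  "vmat d n i j =
     (if (i < d n \<and> j = i)
         \<or> (d n \<le> i \<and> i + 1 < d n + 2 ^ (n - 1) \<and> j = i + 1)
         \<or> (i + 1 = d n + 2 ^ (n - 1) \<and> j = d n)
      then 1 else 0)"

text \<open>u_n = v_1 \<otimes> ... \<otimes> v_n, with the index convention M_(r(n+1)) = M_(r n) \<otimes> M_(l(n+1)),
  (a, b) \<leftrightarrow> a * l(n+1) + b.\<close>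
primrec umat :: "(nat \<Rightarrow> nat) \<Rightarrow> nat \<Rightarrow> nat \<Rightarrow> nat \<Rightarrow> complex" where
  "umat d 0 = (\<lambda>i j. if i = j then 1 else 0)"
| "umat d (Suc n) = (\<lambda>I J. umat d n (I div lL d (Suc n)) (J div lL d (Suc n))
                           * vmat d (Suc n) (I mod lL d (Suc n)) (J mod lL d (Suc n)))"

definition Cn_car :: "(nat \<Rightarrow> nat) \<Rightarrow> nat \<Rightarrow> cfun set" where
  "Cn_car d n = {f. \<forall>i < rR d n. \<forall>j < rR d n. continuous_on (Xsp d n \<times> Zn n) (\<lambda>p. f p i j)}"

definition Cnorm :: "(nat \<Rightarrow> nat) \<Rightarrow> nat \<Rightarrow> cfun \<Rightarrow> real" where
  "Cnorm d n f = Sup ((\<lambda>p. opnorm (rR d n) (f p)) ` (Xsp d n \<times> Zn n))"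

definition Gamma1 :: "(nat \<Rightarrow> nat) \<Rightarrow> (nat \<Rightarrow> (nat \<Rightarrow> real^3)) \<Rightarrow> nat \<Rightarrow> cfun \<Rightarrow> cfun" where
  "Gamma1 d xs n f = (\<lambda>p I J.
     if I mod lL d (Suc n) = J mod lL d (Suc n)
     then f (Smap d xs n (I mod lL d (Suc n) + 1) p) (I div lL d (Suc n)) (J div lL d (Suc n))
     else 0)"

primrec GamK :: "(nat \<Rightarrow> nat) \<Rightarrow> (nat \<Rightarrow> (nat \<Rightarrow> real^3)) \<Rightarrow> nat \<Rightarrow> nat \<Rightarrow> cfun \<Rightarrow> cfun" where
  "GamK d xs n 0 f = f"
| "GamK d xs n (Suc k) f = Gamma1 d xs (n + k) (GamK d xs n k f)"

definition alphan :: "(nat \<Rightarrow> nat) \<Rightarrow> nat \<Rightarrow> cfun \<Rightarrow> cfun" where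
  "alphan d n f = (\<lambda>p. mmul (rR d n) (mmul (rR d n) (umat d n) (f (fst p, (snd p + 1) mod 2 ^ n)))
                          (madj (umat d n)))"

definition lvalid :: "(nat \<Rightarrow> nat) \<Rightarrow> lelt \<Rightarrow> bool" where
  "lvalid d e \<longleftrightarrow> snd e \<in> Cn_car d (fst e)"

definition llift :: "(nat \<Rightarrow> nat) \<Rightarrow> (nat \<Rightarrow> (nat \<Rightarrow> real^3)) \<Rightarrow> nat \<Rightarrow> lelt \<Rightarrow> cfun" where
  "llift d xs m e = GamK d xs (fst e) (m - fst e) (snd e)"

definition lbin :: "(nat \<Rightarrow> nat) \<Rightarrow> (nat \<Rightarrow> (nat \<Rightarrow> real^3))
     \<Rightarrow> (nat \<Rightarrow> cfun \<Rightarrow> cfun \<Rightarrow> cfun) \<Rightarrow> lelt \<Rightarrow> lelt \<Rightarrow> lelt" where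
  "lbin d xs op e e' = (let m = max (fst e) (fst e') in (m, op m (llift d xs m e) (llift d xs m e')))"

definition ladd :: "(nat \<Rightarrow> nat) \<Rightarrow> (nat \<Rightarrow> (nat \<Rightarrow> real^3)) \<Rightarrow> lelt \<Rightarrow> lelt \<Rightarrow> lelt" where
  "ladd d xs = lbin d xs (\<lambda>m f g. \<lambda>p i j. f p i j + g p i j)"

definition lminus :: "(nat \<Rightarrow> nat) \<Rightarrow> (nat \<Rightarrow> (nat \<Rightarrow> real^3)) \<Rightarrow> lelt \<Rightarrow> lelt \<Rightarrow> lelt" where
  "lminus d xs = lbin d xs (\<lambda>m f g. \<lambda>p i j. f p i j - g p i j)"

definition lmul :: "(nat \<Rightarrow> nat) \<Rightarrow> (nat \<Rightarrow> (nat \<Rightarrow> real^3)) \<Rightarrow> lelt \<Rightarrow> lelt \<Rightarrow> lelt" where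
  "lmul d xs = lbin d xs (\<lambda>m f g. \<lambda>p. mmul (rR d m) (f p) (g p))"

definition lstar :: "lelt \<Rightarrow> lelt" where
  "lstar e = (fst e, \<lambda>p. madj (snd e p))"

definition lnorm :: "(nat \<Rightarrow> nat) \<Rightarrow> lelt \<Rightarrow> real" where
  "lnorm d e = Cnorm d (fst e) (snd e)"

definition ldist :: "(nat \<Rightarrow> nat) \<Rightarrow> (nat \<Rightarrow> (nat \<Rightarrow> real^3)) \<Rightarrow> lelt \<Rightarrow> lelt \<Rightarrow> real" where
  "ldist d xs e e' = lnorm d (lminus d xs e e')"

definition Ccar :: "(nat \<Rightarrow> nat) \<Rightarrow> (nat \<Rightarrow> (nat \<Rightarrow> real^3)) \<Rightarrow> celt set" where
  "Ccar d xs = {a. (\<forall>i. lvalid d (a i)) \<and>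
     (\<forall>\<epsilon>>0. \<exists>N. \<forall>i\<ge>N. \<forall>j\<ge>N. ldist d xs (a i) (a j) < \<epsilon>)}"

definition Ceq :: "(nat \<Rightarrow> nat) \<Rightarrow> (nat \<Rightarrow> (nat \<Rightarrow> real^3)) \<Rightarrow> celt \<Rightarrow> celt \<Rightarrow> bool" where
  "Ceq d xs a b \<longleftrightarrow> (\<lambda>i. ldist d xs (a i) (b i)) \<longlonglongrightarrow> 0"

definition CnormC :: "(nat \<Rightarrow> nat) \<Rightarrow> celt \<Rightarrow> real" where
  "CnormC d a = lim (\<lambda>i. lnorm d (a i))"

definition Cadd :: "(nat \<Rightarrow> nat) \<Rightarrow> (nat \<Rightarrow> (nat \<Rightarrow> real^3)) \<Rightarrow> celt \<Rightarrow> celt \<Rightarrow> celt" where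
  "Cadd d xs a b = (\<lambda>i. ladd d xs (a i) (b i))"

definition Cminus :: "(nat \<Rightarrow> nat) \<Rightarrow> (nat \<Rightarrow> (nat \<Rightarrow> real^3)) \<Rightarrow> celt \<Rightarrow> celt \<Rightarrow> celt" where
  "Cminus d xs a b = (\<lambda>i. lminus d xs (a i) (b i))"

definition Cmul :: "(nat \<Rightarrow> nat) \<Rightarrow> (nat \<Rightarrow> (nat \<Rightarrow> real^3)) \<Rightarrow> celt \<Rightarrow> celt \<Rightarrow> celt" where
  "Cmul d xs a b = (\<lambda>i. lmul d xs (a i) (b i))"

definition Cstar :: "celt \<Rightarrow> celt" where
  "Cstar a = (\<lambda>i. lstar (a i))"

definition Czero :: celt where
  "Czero = (\<lambda>i. (0, \<lambda>p k l. 0))"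

definition Cone :: celt where
  "Cone = (\<lambda>i. (0, \<lambda>p k l. if k = l then 1 else 0))"

primrec Csum :: "(nat \<Rightarrow> nat) \<Rightarrow> (nat \<Rightarrow> (nat \<Rightarrow> real^3)) \<Rightarrow> (nat \<Rightarrow> celt) \<Rightarrow> nat \<Rightarrow> celt" where
  "Csum d xs p 0 = Czero"
| "Csum d xs p (Suc m) = Cadd d xs (Csum d xs p m) (p m)"

definition Calpha :: "(nat \<Rightarrow> nat) \<Rightarrow> celt \<Rightarrow> celt" where
  "Calpha d a = (\<lambda>i. (fst (a i), alphan d (fst (a i)) (snd (a i))))"

definition Cproj :: "(nat \<Rightarrow> nat) \<Rightarrow> (nat \<Rightarrow> (nat \<Rightarrow> real^3)) \<Rightarrow> celt \<Rightarrow> bool" where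
  "Cproj d xs p \<longleftrightarrow> p \<in> Ccar d xs \<and> Ceq d xs (Cmul d xs p p) p \<and> Ceq d xs (Cstar p) p"

end

theory Submission
  imports Defs
begin

definition mv :: "nat \<Rightarrow> (nat\<Rightarrow>nat\<Rightarrow>complex) \<Rightarrow> (nat\<Rightarrow>complex) \<Rightarrow> nat\<Rightarrow>complex" where
  "mv r A v = (\<lambda>i. \<Sum>j<r. A i j * v j)"

lemma vnorm_L2: "vnorm r v = L2_set (\<lambda>i. cmod (v i)) {..<r}"
  by (simp add: vnorm_def L2_set_def)

lemma vnorm_nonneg [simp]: "0 \<le> vnorm r v"
  by (simp add: vnorm_L2)

lemma vnorm_add: "vnorm r (\<lambda>i. v i + w i) \<le> vnorm r v + vnorm r w"
proof -
  have "vnorm r (\<lambda>i. v i + w i) \<le> L2_set (\<lambda>i. cmod (v i) + cmod (w i)) {..<r}"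
    unfolding vnorm_L2 by (rule L2_set_mono) (auto simp: norm_triangle_ineq)
  also have "\<dots> \<le> vnorm r v + vnorm r w"
    unfolding vnorm_L2 by (rule L2_set_triangle_ineq)
  finally show ?thesis .
qed

lemma vnorm_scale: "vnorm r (\<lambda>i. c * v i) = cmod c * vnorm r v"
  unfolding vnorm_L2 by (simp add: L2_set_right_distrib norm_mult)

lemma vnorm_cong: "(\<And>i. i < r \<Longrightarrow> v i = w i) \<Longrightarrow> vnorm r v = vnorm r w"
  unfolding vnorm_L2 by (rule L2_set_cong) auto

lemma vnorm_neg: "vnorm r (\<lambda>i. - v i) = vnorm r v"
  unfolding vnorm_L2 by simp

lemma vnorm_diff: "vnorm r (\<lambda>i. v i - w i) \<le> vnorm r v + vnorm r w"
  using vnorm_add[of r v "\<lambda>i. - w i"] by (simp add: vnorm_neg)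

lemma vnorm_zero_iff: "vnorm r v = 0 \<Longrightarrow> i < r \<Longrightarrow> v i = 0"
  unfolding vnorm_L2 by (subst (asm) L2_set_eq_0_iff) auto

lemma vnorm_comp_le: "i < r \<Longrightarrow> cmod (v i) \<le> vnorm r v"
  unfolding vnorm_L2 by (rule member_le_L2_set) auto

lemma vnorm_le_sum: "vnorm r v \<le> (\<Sum>i<r. cmod (v i))"
  unfolding vnorm_L2 by (rule L2_set_le_sum) auto

definition opS :: "nat \<Rightarrow> (nat\<Rightarrow>nat\<Rightarrow>complex) \<Rightarrow> real set" where
  "opS r A = {vnorm r (mv r A v) | v. vnorm r v \<le> 1}"

lemma opnorm_opS: "opnorm r A = Sup (opS r A)"
  by (simp add: opnorm_def opS_def mv_def)

lemma mv_bound: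
  assumes "vnorm r v \<le> 1"
  shows "vnorm r (mv r A v) \<le> (\<Sum>i<r. \<Sum>j<r. cmod (A i j))"
proof -
  have "vnorm r (mv r A v) \<le> (\<Sum>i<r. cmod (mv r A v i))" by (rule vnorm_le_sum)
  also have "\<dots> \<le> (\<Sum>i<r. \<Sum>j<r. cmod (A i j))"
  proof (rule sum_mono)
    fix i assume "i \<in> {..<r}"
    have "cmod (mv r A v i) \<le> (\<Sum>j<r. cmod (A i j * v j))"
      unfolding mv_def by (rule norm_sum)
    also have "\<dots> \<le> (\<Sum>j<r. cmod (A i j))"
    proof (rule sum_mono)
      fix j assume "j \<in> {..<r}"
      then have "cmod (v j) \<le> 1" using vnorm_comp_le[of j r v] assms by auto
      then show "cmod (A i j * v j) \<le> cmod (A i j)"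
        by (simp add: norm_mult mult_left_le)
    qed
    finally show "cmod (mv r A v i) \<le> (\<Sum>j<r. cmod (A i j))" .
  qed
  finally show ?thesis .
qed

lemma opS_ne: "opS r A \<noteq> {}"
  unfolding opS_def by (auto intro!: exI[of _ "\<lambda>i. 0"] simp: vnorm_def)

lemma opS_bdd: "bdd_above (opS r A)"
  unfolding opS_def bdd_above_def using mv_bound by blast

lemma op_upper: "vnorm r v \<le> 1 \<Longrightarrow> vnorm r (mv r A v) \<le> opnorm r A"
  unfolding opnorm_opS by (rule cSup_upper[OF _ opS_bdd]) (auto simp: opS_def)

lemma op_least: "(\<And>v. vnorm r v \<le> 1 \<Longrightarrow> vnorm r (mv r A v) \<le> B) \<Longrightarrow> opnorm r A \<le> B"
  unfolding opnorm_opS by (rule cSup_least[OF opS_ne]) (auto simp: opS_def)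

lemma vnorm_0 [simp]: "vnorm r (\<lambda>i. 0) = 0"
  by (simp add: vnorm_def)

lemma op_nonneg [simp]: "0 \<le> opnorm r A"
proof -
  have "mv r A (\<lambda>i. 0) = (\<lambda>i. 0)" by (simp add: mv_def)
  then show ?thesis using op_upper[of r "\<lambda>i. 0" A] by simp
qed

lemma op_mv: "vnorm r (mv r A v) \<le> opnorm r A * vnorm r v"
proof (cases "vnorm r v = 0")
  case True
  then have "\<forall>i<r. v i = 0" using vnorm_zero_iff by blast
  then have "vnorm r (mv r A v) = vnorm r (\<lambda>i. 0)"
    by (intro vnorm_cong) (simp add: mv_def)
  then show ?thesis using True by simp
next
  case False
  define c where "c = vnorm r v"
  have c: "c > 0" using False c_def vnorm_nonneg[of r v] by linarith
  define w where "w = (\<lambda>i. complex_of_real (1/c) * v i)"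
  have "cmod (complex_of_real (1/c)) = 1/c" using c by (simp add: norm_divide)
  then have "vnorm r w = 1" unfolding w_def vnorm_scale using c c_def by simp
  then have "vnorm r (mv r A w) \<le> opnorm r A" by (intro op_upper) simp
  moreover have mvw: "mv r A w = (\<lambda>i. complex_of_real (1/c) * mv r A v i)"
    by (simp add: w_def mv_def sum_distrib_left algebra_simps)
  moreover have "vnorm r (\<lambda>i. complex_of_real (1/c) * mv r A v i)
     = cmod (complex_of_real (1/c)) * vnorm r (mv r A v)" by (rule vnorm_scale)
  ultimately have "(1/c) * vnorm r (mv r A v) \<le> opnorm r A"
    using \<open>cmod (complex_of_real (1/c)) = 1/c\<close> by metis
  then show ?thesis using c unfolding c_def[symmetric] by (simp add: field_simps)
qed

lemma op_cong: "(\<And>i j. i < r \<Longrightarrow> j < r \<Longrightarrow> A i j = B i j) \<Longrightarrow> opnorm r A = opnorm r B"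
proof -
  assume h: "\<And>i j. i < r \<Longrightarrow> j < r \<Longrightarrow> A i j = B i j"
  have "\<And>v. vnorm r (mv r A v) = vnorm r (mv r B v)"
    by (rule vnorm_cong) (simp add: mv_def h)
  then show ?thesis unfolding opnorm_opS opS_def by simp
qed

lemma op_zero: "(\<And>i j. i < r \<Longrightarrow> j < r \<Longrightarrow> A i j = 0) \<Longrightarrow> opnorm r A = 0"
proof -
  assume h: "\<And>i j. i < r \<Longrightarrow> j < r \<Longrightarrow> A i j = 0"
  have "opnorm r A \<le> 0"
  proof (rule op_least)
    fix v :: "nat \<Rightarrow> complex"
    have "vnorm r (mv r A v) = vnorm r (\<lambda>i. 0)" by (rule vnorm_cong) (simp add: mv_def h)
    then show "vnorm r (mv r A v) \<le> 0" by (simp add: vnorm_def)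
  qed
  then show ?thesis using op_nonneg[of r A] by linarith
qed

lemma op_add: "opnorm r (\<lambda>i j. A i j + B i j) \<le> opnorm r A + opnorm r B"
proof (rule op_least)
  fix v :: "nat \<Rightarrow> complex" assume v: "vnorm r v \<le> 1"
  have "mv r (\<lambda>i j. A i j + B i j) v = (\<lambda>i. mv r A v i + mv r B v i)"
    by (simp add: mv_def algebra_simps sum.distrib)
  then have "vnorm r (mv r (\<lambda>i j. A i j + B i j) v) \<le> vnorm r (mv r A v) + vnorm r (mv r B v)"
    using vnorm_add by simp
  also have "\<dots> \<le> opnorm r A + opnorm r B" using op_upper[OF v] add_mono by blast
  finally show "vnorm r (mv r (\<lambda>i j. A i j + B i j) v) \<le> opnorm r A + opnorm r B" .
qed

lemma op_diff: "opnorm r (\<lambda>i j. A i j - B i j) \<le> opnorm r A + opnorm r B"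
proof (rule op_least)
  fix v :: "nat \<Rightarrow> complex" assume v: "vnorm r v \<le> 1"
  have "mv r (\<lambda>i j. A i j - B i j) v = (\<lambda>i. mv r A v i - mv r B v i)"
    by (simp add: mv_def algebra_simps sum_subtractf)
  then have "vnorm r (mv r (\<lambda>i j. A i j - B i j) v) \<le> vnorm r (mv r A v) + vnorm r (mv r B v)"
    using vnorm_diff by simp
  also have "\<dots> \<le> opnorm r A + opnorm r B" using op_upper[OF v] add_mono by blast
  finally show "vnorm r (mv r (\<lambda>i j. A i j - B i j) v) \<le> opnorm r A + opnorm r B" .
qed

lemma op_diff_sym: "opnorm r (\<lambda>i j. A i j - B i j) = opnorm r (\<lambda>i j. B i j - A i j)"
proof -
  have "\<And>v. vnorm r (mv r (\<lambda>i j. A i j - B i j) v) = vnorm r (mv r (\<lambda>i j. B i j - A i j) v)"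
  proof -
    fix v
    have "mv r (\<lambda>i j. A i j - B i j) v = (\<lambda>i. - mv r (\<lambda>i j. B i j - A i j) v i)"
      by (simp add: mv_def algebra_simps sum_subtractf)
    then show "?thesis v" by (simp add: vnorm_neg)
  qed
  then show ?thesis unfolding opnorm_opS opS_def by simp
qed

lemma mv_mmul: "mv r (mmul r A B) v = mv r A (mv r B v)"
proof
  fix i
  have "mv r (mmul r A B) v i = (\<Sum>j<r. \<Sum>l<r. A i l * B l j * v j)"
    unfolding mv_def mmul_def by (simp add: sum_distrib_right)
  also have "\<dots> = (\<Sum>l<r. \<Sum>j<r. A i l * B l j * v j)"
    by (rule sum.swap)
  also have "\<dots> = mv r A (mv r B v) i"
    unfolding mv_def by (simp add: sum_distrib_left mult.assoc)
  finally show "mv r (mmul r A B) v i = mv r A (mv r B v) i" .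
qed

lemma op_mul: "opnorm r (mmul r A B) \<le> opnorm r A * opnorm r B"
proof (rule op_least)
  fix v :: "nat \<Rightarrow> complex" assume v: "vnorm r v \<le> 1"
  have "vnorm r (mv r (mmul r A B) v) \<le> opnorm r A * vnorm r (mv r B v)"
    unfolding mv_mmul by (rule op_mv)
  also have "\<dots> \<le> opnorm r A * opnorm r B"
    by (rule mult_left_mono[OF op_upper[OF v]]) simp
  finally show "vnorm r (mv r (mmul r A B) v) \<le> opnorm r A * opnorm r B" .
qed


lemma sum_shift_ivl: "(\<Sum>I\<in>{c..<c+l}. h I) = (\<Sum>b<l. h (c+b))" for c l :: nat
  by (induct l) (auto simp: sum.atLeastLessThan_Suc)

lemma sum_grid: "(\<Sum>I<r*l. h I) = (\<Sum>a<r. \<Sum>b<l. h (a*l+b))" for r l :: nat and h :: "nat \<Rightarrow> 'a::comm_monoid_add"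
  using sum.nat_group[where g=h and k=l and n=r] sum_shift_ivl[of h] by (simp add: mult.commute)

definition blk :: "nat \<Rightarrow> (nat \<Rightarrow> nat \<Rightarrow> nat \<Rightarrow> complex) \<Rightarrow> nat \<Rightarrow> nat \<Rightarrow> complex" where
  "blk l F = (\<lambda>I J. if I mod l = J mod l then F (I mod l) (I div l) (J div l) else 0)"

definition Wv :: "nat \<Rightarrow> (nat \<Rightarrow> complex) \<Rightarrow> nat \<Rightarrow> nat \<Rightarrow> complex" where
  "Wv l v b = (\<lambda>a. v (a*l+b))"

lemma mv_blk:
  assumes "0 < l"
  shows "mv (r*l) (blk l F) v I = mv r (F (I mod l)) (Wv l v (I mod l)) (I div l)"
proof -
  have "mv (r*l) (blk l F) v I = (\<Sum>a<r. \<Sum>c<l. blk l F I (a*l+c) * v (a*l+c))"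
    unfolding mv_def by (rule sum_grid)
  also have "\<dots> = (\<Sum>a<r. \<Sum>c<l. if c = I mod l then F (I mod l) (I div l) a * v (a*l+I mod l) else 0)"
    by (intro sum.cong refl) (auto simp: blk_def)
  also have "\<dots> = (\<Sum>a<r. F (I mod l) (I div l) a * v (a*l+I mod l))"
    using assms by simp
  finally show ?thesis by (simp add: mv_def Wv_def)
qed

lemma vnorm_sq: "(vnorm r v)\<^sup>2 = (\<Sum>i<r. (cmod (v i))\<^sup>2)"
  unfolding vnorm_def by (simp add: sum_nonneg)

lemma vnorm_sq_grid:
  assumes "0 < l"
  shows "(vnorm (r*l) v)\<^sup>2 = (\<Sum>b<l. (vnorm r (Wv l v b))\<^sup>2)"
proof -
  have "(vnorm (r*l) v)\<^sup>2 = (\<Sum>a<r. \<Sum>b<l. (cmod (v (a*l+b)))\<^sup>2)"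
    unfolding vnorm_sq by (rule sum_grid)
  also have "\<dots> = (\<Sum>b<l. \<Sum>a<r. (cmod (v (a*l+b)))\<^sup>2)" by (rule sum.swap)
  finally show ?thesis by (simp add: vnorm_sq Wv_def)
qed

lemma vnorm_sq_blk:
  assumes "0 < l"
  shows "(vnorm (r*l) (mv (r*l) (blk l F) v))\<^sup>2 = (\<Sum>b<l. (vnorm r (mv r (F b) (Wv l v b)))\<^sup>2)"
proof -
  have "(vnorm (r*l) (mv (r*l) (blk l F) v))\<^sup>2 = (\<Sum>b<l. (vnorm r (Wv l (mv (r*l) (blk l F) v) b))\<^sup>2)"
    by (rule vnorm_sq_grid[OF assms])
  also have "\<dots> = (\<Sum>b<l. (vnorm r (mv r (F b) (Wv l v b)))\<^sup>2)"
  proof (intro sum.cong refl arg_cong[where f="\<lambda>x. x\<^sup>2"])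
    fix b assume b: "b \<in> {..<l}"
    show "vnorm r (Wv l (mv (r*l) (blk l F) v) b) = vnorm r (mv r (F b) (Wv l v b))"
    proof (rule vnorm_cong)
      fix a assume "a < r"
      have "(a*l+b) mod l = b" "(a*l+b) div l = a" using b assms by auto
      then show "Wv l (mv (r*l) (blk l F) v) b a = mv r (F b) (Wv l v b) a"
        unfolding Wv_def by (simp add: mv_blk[OF assms] Wv_def)
    qed
  qed
  finally show ?thesis .
qed

lemma blk_le:
  assumes l: "0 < l" and B: "\<And>b. b < l \<Longrightarrow> opnorm r (F b) \<le> B" and B0: "0 \<le> B"
  shows "opnorm (r*l) (blk l F) \<le> B"
proof (rule op_least)
  fix v :: "nat \<Rightarrow> complex" assume v: "vnorm (r*l) v \<le> 1"
  have "(vnorm (r*l) (mv (r*l) (blk l F) v))\<^sup>2 = (\<Sum>b<l. (vnorm r (mv r (F b) (Wv l v b)))\<^sup>2)"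
    by (rule vnorm_sq_blk[OF l])
  also have "\<dots> \<le> (\<Sum>b<l. B\<^sup>2 * (vnorm r (Wv l v b))\<^sup>2)"
  proof (rule sum_mono)
    fix b assume "b \<in> {..<l}"
    then have "opnorm r (F b) \<le> B" using B by auto
    then have "vnorm r (mv r (F b) (Wv l v b)) \<le> B * vnorm r (Wv l v b)"
      using op_mv[of r "F b" "Wv l v b"] mult_right_mono[of "opnorm r (F b)" B "vnorm r (Wv l v b)"]
      by simp
    then show "(vnorm r (mv r (F b) (Wv l v b)))\<^sup>2 \<le> B\<^sup>2 * (vnorm r (Wv l v b))\<^sup>2"
      by (metis power_mono power_mult_distrib vnorm_nonneg)
  qed
  also have "\<dots> = B\<^sup>2 * (vnorm (r*l) v)\<^sup>2"
    by (simp add: vnorm_sq_grid[OF l] sum_distrib_left)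
  also have "\<dots> \<le> B\<^sup>2 * 1"
    using v by (intro mult_left_mono) (auto simp: power_le_one)
  finally have "(vnorm (r*l) (mv (r*l) (blk l F) v))\<^sup>2 \<le> B\<^sup>2" by simp
  then show "vnorm (r*l) (mv (r*l) (blk l F) v) \<le> B"
    using B0 by (simp add: power2_le_iff_abs_le)
qed

lemma blk_ge:
  assumes l: "b < l"
  shows "opnorm r (F b) \<le> opnorm (r*l) (blk l F)"
proof (rule op_least)
  have l0: "0 < l" using l by simp
  fix v :: "nat \<Rightarrow> complex" assume v: "vnorm r v \<le> 1"
  define V where "V = (\<lambda>J. if J mod l = b then v (J div l) else 0)"
  have WV: "Wv l V b' = (if b' = b then v else (\<lambda>a. 0))" if "b' < l" for b'
    using that l0 by (auto simp: Wv_def V_def)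
  have "(vnorm (r*l) V)\<^sup>2 = (\<Sum>b'<l. (vnorm r (Wv l V b'))\<^sup>2)" by (rule vnorm_sq_grid[OF l0])
  also have "\<dots> = (\<Sum>b'<l. if b' = b then (vnorm r v)\<^sup>2 else 0)"
    by (intro sum.cong refl) (auto simp: WV)
  also have "\<dots> = (vnorm r v)\<^sup>2" using l by simp
  finally have "vnorm (r*l) V = vnorm r v"
    by (simp add: power2_eq_iff_nonneg)
  then have V1: "vnorm (r*l) V \<le> 1" using v by simp
  have "(vnorm (r*l) (mv (r*l) (blk l F) V))\<^sup>2 = (\<Sum>b'<l. (vnorm r (mv r (F b') (Wv l V b')))\<^sup>2)"
    by (rule vnorm_sq_blk[OF l0])
  also have "\<dots> = (\<Sum>b'<l. if b' = b then (vnorm r (mv r (F b) v))\<^sup>2 else 0)"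
  proof (intro sum.cong refl)
    fix b' assume "b' \<in> {..<l}"
    moreover have "mv r (F b') (\<lambda>a. 0) = (\<lambda>a. 0)" by (simp add: mv_def)
    ultimately show "(vnorm r (mv r (F b') (Wv l V b')))\<^sup>2 = (if b' = b then (vnorm r (mv r (F b) v))\<^sup>2 else 0)"
      by (auto simp: WV)
  qed
  also have "\<dots> = (vnorm r (mv r (F b) v))\<^sup>2" using l by simp
  finally have "vnorm r (mv r (F b) v) = vnorm (r*l) (mv (r*l) (blk l F) V)"
    by (simp add: power2_eq_iff_nonneg)
  also have "\<dots> \<le> opnorm (r*l) (blk l F)" by (rule op_upper[OF V1])
  finally show "vnorm r (mv r (F b) v) \<le> opnorm (r*l) (blk l F)" .
qed


definition Dom :: "(nat \<Rightarrow> nat) \<Rightarrow> nat \<Rightarrow> pt set" where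
  "Dom d n = Xsp d n \<times> Zn n"

lemma rR_Suc: "rR d (Suc n) = rR d n * lL d (Suc n)"
  by (simp add: rR_def)

lemma sS_Suc: "sS d (Suc n) = sS d n * d (Suc n)"
  by (simp add: sS_def)

lemma lL_Suc: "lL d (Suc n) = d (Suc n) + 2 ^ n"
  by (simp add: lL_def)

lemma lL_pos: "0 < lL d n"
  by (simp add: lL_def)

lemma rR_pos: "0 < rR d n"
  unfolding rR_def using lL_pos by (simp add: prod_pos)

lemma Gamma1_blk: "Gamma1 d xs n f p = blk (lL d (Suc n)) (\<lambda>b. f (Smap d xs n (b+1) p))"
  by (simp add: Gamma1_def blk_def fun_eq_iff)

definition eqv :: "(nat \<Rightarrow> nat) \<Rightarrow> nat \<Rightarrow> cfun \<Rightarrow> cfun \<Rightarrow> bool" where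
  "eqv d n f g \<longleftrightarrow> (\<forall>q\<in>Dom d n. \<forall>i<rR d n. \<forall>j<rR d n. f q i j = g q i j)"

definition bnd :: "(nat \<Rightarrow> nat) \<Rightarrow> nat \<Rightarrow> cfun \<Rightarrow> bool" where
  "bnd d n f \<longleftrightarrow> (\<exists>B. \<forall>q\<in>Dom d n. opnorm (rR d n) (f q) \<le> B)"

lemma eqv_refl: "eqv d n f f" by (simp add: eqv_def)
lemma eqv_sym: "eqv d n f g \<Longrightarrow> eqv d n g f" by (simp add: eqv_def)
lemma eqv_trans: "eqv d n f g \<Longrightarrow> eqv d n g h \<Longrightarrow> eqv d n f h" by (simp add: eqv_def)

lemma Cnorm_SUP: "Cnorm d n f = (SUP q\<in>Dom d n. opnorm (rR d n) (f q))"
  by (simp add: Cnorm_def Dom_def)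

lemma bnd_eqv: "eqv d n f g \<Longrightarrow> bnd d n f \<Longrightarrow> bnd d n g"
  unfolding bnd_def eqv_def using op_cong by metis

lemma Cnorm_eqv: "eqv d n f g \<Longrightarrow> Cnorm d n f = Cnorm d n g"
  unfolding Cnorm_SUP eqv_def by (intro SUP_cong refl op_cong) auto

lemma Cnorm_upper: "bnd d n f \<Longrightarrow> q \<in> Dom d n \<Longrightarrow> opnorm (rR d n) (f q) \<le> Cnorm d n f"
  unfolding Cnorm_SUP bnd_def by (rule cSUP_upper) (auto simp: bdd_above_def)

lemma Cnorm_least: "Dom d n \<noteq> {} \<Longrightarrow> (\<And>q. q \<in> Dom d n \<Longrightarrow> opnorm (rR d n) (f q) \<le> B) \<Longrightarrow> Cnorm d n f \<le> B"
  unfolding Cnorm_SUP by (rule cSUP_least) auto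

lemma Cnorm_zero: "Dom d n \<noteq> {} \<Longrightarrow> eqv d n f (\<lambda>p i j. 0) \<Longrightarrow> Cnorm d n f = 0"
proof -
  assume ne: "Dom d n \<noteq> {}" and e: "eqv d n f (\<lambda>p i j. 0)"
  have "Cnorm d n f = Cnorm d n (\<lambda>p i j. 0)" by (rule Cnorm_eqv[OF e])
  also have "\<dots> = 0" unfolding Cnorm_SUP using ne by (simp add: op_zero)
  finally show ?thesis .
qed

lemma op_sum_bound: "opnorm r A \<le> (\<Sum>i<r. \<Sum>j<r. cmod (A i j))"
  by (rule op_least) (rule mv_bound)

lemma mmul_blk:
  assumes l: "0 < l" and I: "I < r*l" and J: "J < r*l"
  shows "mmul (r*l) (blk l F) (blk l G) I J = blk l (\<lambda>b. mmul r (F b) (G b)) I J"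
proof -
  have "mmul (r*l) (blk l F) (blk l G) I J = (\<Sum>a<r. \<Sum>c<l. blk l F I (a*l+c) * blk l G (a*l+c) J)"
    unfolding mmul_def by (rule sum_grid)
  also have "\<dots> = (\<Sum>a<r. \<Sum>c<l. if c = I mod l then
       (if I mod l = J mod l then F (I mod l) (I div l) a * G (I mod l) a (J div l) else 0) else 0)"
    by (intro sum.cong refl) (auto simp: blk_def)
  also have "\<dots> = (\<Sum>a<r. if I mod l = J mod l then F (I mod l) (I div l) a * G (I mod l) a (J div l) else 0)"
    using l by simp
  also have "\<dots> = blk l (\<lambda>b. mmul r (F b) (G b)) I J"
    by (simp add: blk_def mmul_def)
  finally show ?thesis .
qed

lemma Gamma1_minus: "Gamma1 d xs n (\<lambda>p i j. f p i j - g p i j) = (\<lambda>p i j. Gamma1 d xs n f p i j - Gamma1 d xs n g p i j)"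
  by (simp add: Gamma1_def fun_eq_iff)

lemma Gamma1_zero: "Gamma1 d xs n (\<lambda>p i j. 0) = (\<lambda>p i j. 0)"
  by (simp add: Gamma1_def fun_eq_iff)

lemma Gamma1_delta: "Gamma1 d xs n (\<lambda>p i j. if i = j then 1 else 0) = (\<lambda>p i j. if i = j then 1 else 0)"
proof -
  have "\<And>I J. (I mod l = J mod l \<and> I div l = J div l) = (I = J)" for l :: nat
    by (metis div_mult_mod_eq)
  then show ?thesis by (auto simp: Gamma1_def fun_eq_iff)
qed

lemma GamK_minus: "GamK d xs n k (\<lambda>p i j. f p i j - g p i j) = (\<lambda>p i j. GamK d xs n k f p i j - GamK d xs n k g p i j)"
  by (induct k) (simp_all add: Gamma1_minus)

lemma GamK_zero: "GamK d xs n k (\<lambda>p i j. 0) = (\<lambda>p i j. 0)"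
  by (induct k) (simp_all add: Gamma1_zero)

lemma GamK_delta: "GamK d xs n k (\<lambda>p i j. if i = j then 1 else 0) = (\<lambda>p i j. if i = j then 1 else 0)"
  by (induct k) (simp_all add: Gamma1_delta)

lemma GamK_add: "GamK d xs n (k1 + k2) f = GamK d xs (n + k1) k2 (GamK d xs n k1 f)"
  by (induct k2) (simp_all add: add.assoc)

lemma compact_Xsp: "compact (Xsp d n)"
proof -
  have eq: "Xsp d n = PiE UNIV (\<lambda>i. if i < sS d n then sphere 0 1 else {0})"
  proof -
    have m: "x \<in> Xsp d n \<longleftrightarrow> (\<forall>i. x i \<in> (if i < sS d n then sphere 0 1 else {0}))" for x
      unfolding Xsp_def by (auto simp: not_less)
    show ?thesis by (auto simp: PiE_UNIV_domain Pi_iff m)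
  qed
  have "compactin (product_topology (\<lambda>i. euclidean) UNIV) (PiE UNIV (\<lambda>i. if i < sS d n then sphere (0::real^3) 1 else {0}))"
    by (subst compactin_PiE) auto
  then show ?thesis unfolding eq euclidean_product_topology by simp
qed

lemma compact_Dom: "compact (Dom d n)"
  unfolding Dom_def Zn_def by (intro compact_Times compact_Xsp finite_imp_compact) auto

lemma Cn_car_bnd:
  assumes "f \<in> Cn_car d n"
  shows "bnd d n f"
proof -
  have "\<exists>B. \<forall>q\<in>Dom d n. cmod (f q i j) \<le> B" if "i < rR d n" "j < rR d n" for i j
  proof -
    have "continuous_on (Dom d n) (\<lambda>p. f p i j)" using assms that by (simp add: Cn_car_def Dom_def)
    then have "compact ((\<lambda>p. f p i j) ` Dom d n)" by (rule compact_continuous_image[OF _ compact_Dom])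
    then have "bounded ((\<lambda>p. f p i j) ` Dom d n)" by (rule compact_imp_bounded)
    then show ?thesis by (auto simp: bounded_iff)
  qed
  then obtain Bf where Bf: "\<And>i j q. i < rR d n \<Longrightarrow> j < rR d n \<Longrightarrow> q \<in> Dom d n \<Longrightarrow> cmod (f q i j) \<le> Bf i j"
    by metis
  have "opnorm (rR d n) (f q) \<le> (\<Sum>i<rR d n. \<Sum>j<rR d n. Bf i j)" if "q \<in> Dom d n" for q
  proof -
    have "(\<Sum>i<rR d n. \<Sum>j<rR d n. cmod (f q i j)) \<le> (\<Sum>i<rR d n. \<Sum>j<rR d n. Bf i j)"
      by (intro sum_mono) (simp add: Bf that)
    then show ?thesis using op_sum_bound[of "rR d n" "f q"] by linarith
  qed
  then show ?thesis unfolding bnd_def by blast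
qed


locale setting =
  fixes d :: "nat \<Rightarrow> nat" and xs :: "nat \<Rightarrow> (nat \<Rightarrow> real^3)"
  assumes xs_in: "\<And>m. xs m \<in> Xsp d m" and dpos: "\<And>n. 0 < d n"
begin

lemma Dom_ne: "Dom d n \<noteq> {}"
proof -
  have "(xs n, 0) \<in> Dom d n" using xs_in[of n] by (simp add: Dom_def Zn_def)
  then show ?thesis by blast
qed

lemma Smap_in:
  assumes p: "p \<in> Dom d (Suc n)" and b: "b < lL d (Suc n)"
  shows "Smap d xs n (b+1) p \<in> Dom d n"
proof (cases "b + 1 \<le> d (Suc n)")
  case True
  obtain x z where pz: "p = (x, z)" by (cases p)
  have x: "x \<in> Xsp d (Suc n)" and z: "z < 2 ^ Suc n" using p pz by (auto simp: Dom_def Zn_def)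
  have "proj d n (b+1) x \<in> Xsp d n"
  proof -
    have "x (b * sS d n + i) \<in> sphere 0 1" if "i < sS d n" for i
    proof -
      have "b * sS d n + i < (b+1) * sS d n" using that by simp
      also have "\<dots> \<le> d (Suc n) * sS d n" using True by (intro mult_le_mono1)
      finally show ?thesis using x by (simp add: Xsp_def sS_Suc mult.commute)
    qed
    then show ?thesis by (simp add: Xsp_def proj_def)
  qed
  moreover have "z mod 2 ^ n < 2 ^ n" by simp
  ultimately show ?thesis using True by (simp add: Smap_def pz Dom_def Zn_def)
next
  case False
  then show ?thesis using b xs_in[of n] by (auto simp: Smap_def Dom_def Zn_def lL_Suc)
qed

lemma Smap_surj:
  assumes q: "q \<in> Dom d n"
  shows "\<exists>p\<in>Dom d (Suc n). Smap d xs n 1 p = q"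
proof -
  obtain y z where qz: "q = (y, z)" by (cases q)
  have y: "y \<in> Xsp d n" and z: "z < 2 ^ n" using q qz by (auto simp: Dom_def Zn_def)
  define x where "x = (\<lambda>i. if i < sS d n then y i else if i < sS d (Suc n) then axis 1 1 else (0::real^3))"
  have le: "sS d n \<le> sS d (Suc n)" using dpos[of "Suc n"] by (simp add: sS_Suc)
  have "x \<in> Xsp d (Suc n)"
    using y le by (auto simp: Xsp_def x_def)
  moreover have "(z::nat) < 2 ^ Suc n" using z by simp
  moreover have "proj d n 1 x = y"
    using y by (auto simp: proj_def x_def fun_eq_iff Xsp_def)
  moreover have "1 \<le> d (Suc n)" using dpos[of "Suc n"] by simp
  ultimately show ?thesis using z
    by (intro bexI[of _ "(x, z)"]) (auto simp: Smap_def qz Dom_def Zn_def)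
qed

lemma Gamma1_op_le:
  assumes B: "\<And>p. p \<in> Dom d n \<Longrightarrow> opnorm (rR d n) (f p) \<le> B" and q: "q \<in> Dom d (Suc n)"
  shows "opnorm (rR d (Suc n)) (Gamma1 d xs n f q) \<le> B"
proof -
  obtain p0 where "p0 \<in> Dom d n" using Dom_ne by blast
  then have B0: "0 \<le> B" using B[of p0] op_nonneg[of "rR d n" "f p0"] by linarith
  show ?thesis unfolding Gamma1_blk rR_Suc
    by (rule blk_le[OF lL_pos _ B0]) (rule B[OF Smap_in[OF q]])
qed

lemma Gamma1_Cnorm:
  assumes f: "bnd d n f"
  shows "bnd d (Suc n) (Gamma1 d xs n f) \<and> Cnorm d (Suc n) (Gamma1 d xs n f) = Cnorm d n f"
proof -
  have le: "opnorm (rR d (Suc n)) (Gamma1 d xs n f q) \<le> Cnorm d n f" if "q \<in> Dom d (Suc n)" for q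
    by (rule Gamma1_op_le[OF Cnorm_upper[OF f] that])
  then have b: "bnd d (Suc n) (Gamma1 d xs n f)" unfolding bnd_def by blast
  have "Cnorm d (Suc n) (Gamma1 d xs n f) \<le> Cnorm d n f" by (rule Cnorm_least[OF Dom_ne le])
  moreover have "Cnorm d n f \<le> Cnorm d (Suc n) (Gamma1 d xs n f)"
  proof (rule Cnorm_least[OF Dom_ne])
    fix q assume q: "q \<in> Dom d n"
    obtain p where p: "p \<in> Dom d (Suc n)" "Smap d xs n 1 p = q" using Smap_surj[OF q] by blast
    have "opnorm (rR d n) (f q) = opnorm (rR d n) ((\<lambda>b. f (Smap d xs n (b+1) p)) 0)" using p by simp
    also have "\<dots> \<le> opnorm (rR d n * lL d (Suc n)) (blk (lL d (Suc n)) (\<lambda>b. f (Smap d xs n (b+1) p)))"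
      by (rule blk_ge[OF lL_pos])
    also have "\<dots> = opnorm (rR d (Suc n)) (Gamma1 d xs n f p)" by (simp add: Gamma1_blk rR_Suc)
    also have "\<dots> \<le> Cnorm d (Suc n) (Gamma1 d xs n f)" by (rule Cnorm_upper[OF b p(1)])
    finally show "opnorm (rR d n) (f q) \<le> Cnorm d (Suc n) (Gamma1 d xs n f)" .
  qed
  ultimately show ?thesis using b by simp
qed

lemma Gamma1_eqv:
  assumes "eqv d n f g"
  shows "eqv d (Suc n) (Gamma1 d xs n f) (Gamma1 d xs n g)"
  unfolding eqv_def
proof (intro ballI allI impI)
  fix q I J assume q: "q \<in> Dom d (Suc n)" and I: "I < rR d (Suc n)" and J: "J < rR d (Suc n)"
  have l: "0 < lL d (Suc n)" by (rule lL_pos)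
  have "I div lL d (Suc n) < rR d n" "J div lL d (Suc n) < rR d n"
    using I J l by (simp_all add: rR_Suc less_mult_imp_div_less)
  moreover have "Smap d xs n (I mod lL d (Suc n) + 1) q \<in> Dom d n"
    using Smap_in[OF q] l by simp
  ultimately show "Gamma1 d xs n f q I J = Gamma1 d xs n g q I J"
    using assms by (auto simp: Gamma1_def eqv_def)
qed

lemma Gamma1_mul:
  "eqv d (Suc n) (Gamma1 d xs n (\<lambda>p. mmul (rR d n) (f p) (g p)))
                 (\<lambda>p. mmul (rR d (Suc n)) (Gamma1 d xs n f p) (Gamma1 d xs n g p))"
  unfolding eqv_def
proof (intro ballI allI impI)
  fix q I J assume I: "I < rR d (Suc n)" and J: "J < rR d (Suc n)"
  show "Gamma1 d xs n (\<lambda>p. mmul (rR d n) (f p) (g p)) q I J =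
        mmul (rR d (Suc n)) (Gamma1 d xs n f q) (Gamma1 d xs n g q) I J"
    unfolding Gamma1_blk rR_Suc
    using mmul_blk[OF lL_pos, of I "rR d n" d "Suc n" J] I J by (simp add: rR_Suc)
qed

lemma GamK_Cnorm:
  "bnd d n f \<Longrightarrow> bnd d (n+k) (GamK d xs n k f) \<and> Cnorm d (n+k) (GamK d xs n k f) = Cnorm d n f"
  by (induct k) (simp_all add: Gamma1_Cnorm)

lemma GamK_eqv: "eqv d n f g \<Longrightarrow> eqv d (n+k) (GamK d xs n k f) (GamK d xs n k g)"
  by (induct k) (simp_all add: Gamma1_eqv)

lemma GamK_mul:
  "eqv d (n+k) (GamK d xs n k (\<lambda>p. mmul (rR d n) (f p) (g p)))
               (\<lambda>p. mmul (rR d (n+k)) (GamK d xs n k f p) (GamK d xs n k g p))"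
proof (induct k)
  case 0 then show ?case by (simp add: eqv_refl)
next
  case (Suc k)
  have "eqv d (Suc (n+k)) (GamK d xs n (Suc k) (\<lambda>p. mmul (rR d n) (f p) (g p)))
     (Gamma1 d xs (n+k) (\<lambda>p. mmul (rR d (n+k)) (GamK d xs n k f p) (GamK d xs n k g p)))"
    using Gamma1_eqv[OF Suc] by simp
  moreover have "eqv d (Suc (n+k)) (Gamma1 d xs (n+k) (\<lambda>p. mmul (rR d (n+k)) (GamK d xs n k f p) (GamK d xs n k g p)))
     (\<lambda>p. mmul (rR d (Suc (n+k))) (GamK d xs n (Suc k) f p) (GamK d xs n (Suc k) g p))"
    using Gamma1_mul by simp
  ultimately show ?case using eqv_trans by simp
qed

end


lemma lbin_same: "lbin d xs op (n, f) (n, g) = (n, op n f g)"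
  by (simp add: lbin_def llift_def)

lemma ldist_same: "ldist d xs (n, f) (n, g) = Cnorm d n (\<lambda>p i j. f p i j - g p i j)"
  by (simp add: ldist_def lminus_def lbin_same lnorm_def)

definition Ek :: "(nat \<Rightarrow> nat) \<Rightarrow> nat \<Rightarrow> nat \<Rightarrow> cfun" where
  "Ek d n c = (\<lambda>p i j. if i = j \<and> i < rR d n \<and> snd p = c then 1 else 0)"

lemma mmul_diag_left:
  assumes "i < r" "j < r"
  shows "mmul r (\<lambda>i j. if i = j \<and> i < r \<and> P then 1 else 0) A i j = (if P then A i j else 0)"
proof -
  have "mmul r (\<lambda>i j. if i = j \<and> i < r \<and> P then 1 else 0) A i j
      = (\<Sum>l<r. if l = i then (if P then A i j else 0) else 0)"
    unfolding mmul_def using assms by (intro sum.cong refl) auto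
  then show ?thesis using assms by simp
qed

lemma mmul_diag_right:
  assumes "j < r"
  shows "mmul r A (\<lambda>i j. if i = j \<and> i < r \<and> P then 1 else 0) i j = (if P then A i j else 0)"
proof -
  have "mmul r A (\<lambda>i j. if i = j \<and> i < r \<and> P then 1 else 0) i j
      = (\<Sum>l<r. if l = j then (if P then A i j else 0) else 0)"
    unfolding mmul_def using assms by (intro sum.cong refl) auto
  then show ?thesis using assms by simp
qed

lemma Ek_Cn_car: "Ek d n c \<in> Cn_car d n"
proof -
  have c: "continuous_on A (\<lambda>p::pt. (if snd p = c then 1 else 0::complex))" for A
    using continuous_on_compose[OF continuous_on_snd[OF continuous_on_id] Topological_Spaces.continuous_on_discrete,
        of A "\<lambda>z::nat. if z = c then 1 else (0::complex)"]
    by (simp add: o_def)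
  have "continuous_on A (\<lambda>p. Ek d n c p i j)" for A i j
  proof (cases "i = j \<and> i < rR d n")
    case True then show ?thesis using c by (simp add: Ek_def)
  next
    case False
    then have e: "(\<lambda>p. Ek d n c p i j) = (\<lambda>p. 0)" by (auto simp: Ek_def fun_eq_iff)
    show ?thesis unfolding e by (rule continuous_on_const)
  qed
  then show ?thesis by (simp add: Cn_car_def)
qed

lemma Ek_op_le: "opnorm (rR d n) (Ek d n c q) \<le> 1"
proof (rule op_least)
  fix v :: "nat \<Rightarrow> complex" assume v: "vnorm (rR d n) v \<le> 1"
  have "vnorm (rR d n) (mv (rR d n) (Ek d n c q) v) = vnorm (rR d n) (\<lambda>i. (if snd q = c then 1 else 0) * v i)"
  proof (rule vnorm_cong)
    fix i assume i: "i < rR d n"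
    have "mv (rR d n) (Ek d n c q) v i = (\<Sum>j<rR d n. if j = i then (if snd q = c then 1 else 0) * v i else 0)"
      unfolding mv_def Ek_def using i by (intro sum.cong refl) auto
    then show "mv (rR d n) (Ek d n c q) v i = (if snd q = c then 1 else 0) * v i" using i by simp
  qed
  also have "\<dots> \<le> 1" unfolding vnorm_scale using v by auto
  finally show "vnorm (rR d n) (mv (rR d n) (Ek d n c q) v) \<le> 1" .
qed

definition vs :: "(nat \<Rightarrow> nat) \<Rightarrow> nat \<Rightarrow> nat \<Rightarrow> nat" where
  "vs d n i = (if i < d (Suc n) then i else if i + 1 < d (Suc n) + 2 ^ n then i + 1 else d (Suc n))"

lemma vmat_perm:
  assumes i: "i < lL d (Suc n)"
  shows "vmat d (Suc n) i b = (if b = vs d n i then 1 else 0)"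
proof -
  have pos: "0 < (2::nat) ^ n" by simp
  have h: "i < d (Suc n) \<Longrightarrow> Suc i < d (Suc n) + 2 ^ n" using pos by linarith
  show ?thesis using i h by (auto simp: vmat_def lL_Suc vs_def)
qed

lemma vmat_unitary:
  assumes i: "i < lL d (Suc n)" and j: "j < lL d (Suc n)"
  shows "(\<Sum>b<lL d (Suc n). vmat d (Suc n) i b * cnj (vmat d (Suc n) j b)) = (if i = j then 1 else 0)"
proof -
  have sl: "vs d n k < lL d (Suc n)" if "k < lL d (Suc n)" for k using that by (auto simp: vs_def lL_Suc)
  have sinj: "vs d n i = vs d n j \<longleftrightarrow> i = j" using i j by (auto simp: vs_def lL_Suc)
  have "(\<Sum>b<lL d (Suc n). vmat d (Suc n) i b * cnj (vmat d (Suc n) j b))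
      = (\<Sum>b<lL d (Suc n). if b = vs d n i then (if vs d n i = vs d n j then 1 else 0) else 0)"
    by (intro sum.cong refl) (simp add: vmat_perm[OF i] vmat_perm[OF j])
  also have "\<dots> = (if i = j then 1 else 0)" using sl[OF i] sinj by simp
  finally show ?thesis .
qed

lemma umat_unitary:
  "i < rR d n \<Longrightarrow> j < rR d n \<Longrightarrow> (\<Sum>l<rR d n. umat d n i l * cnj (umat d n j l)) = (if i = j then 1 else 0)"
proof (induct n arbitrary: i j)
  case 0
  then show ?case by (simp add: rR_def lL_def)
next
  case (Suc n)
  let ?l = "lL d (Suc n)" and ?r = "rR d n"
  have l: "0 < ?l" by (rule lL_pos)
  have i1: "i div ?l < ?r" and j1: "j div ?l < ?r"
    using Suc.prems l by (simp_all add: rR_Suc less_mult_imp_div_less)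
  have i2: "i mod ?l < ?l" and j2: "j mod ?l < ?l" using l by simp_all
  have "(\<Sum>L<rR d (Suc n). umat d (Suc n) i L * cnj (umat d (Suc n) j L))
     = (\<Sum>a<?r. \<Sum>b<?l. umat d (Suc n) i (a*?l+b) * cnj (umat d (Suc n) j (a*?l+b)))"
    unfolding rR_Suc by (rule sum_grid)
  also have "\<dots> = (\<Sum>a<?r. \<Sum>b<?l. (umat d n (i div ?l) a * cnj (umat d n (j div ?l) a))
        * (vmat d (Suc n) (i mod ?l) b * cnj (vmat d (Suc n) (j mod ?l) b)))"
    by (intro sum.cong refl) (simp add: l)
  also have "\<dots> = (\<Sum>a<?r. umat d n (i div ?l) a * cnj (umat d n (j div ?l) a))
        * (\<Sum>b<?l. vmat d (Suc n) (i mod ?l) b * cnj (vmat d (Suc n) (j mod ?l) b))"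
    by (simp add: sum_product)
  also have "\<dots> = (if i div ?l = j div ?l then 1 else 0) * (if i mod ?l = j mod ?l then 1 else 0)"
    using Suc.hyps[OF i1 j1] vmat_unitary[OF i2 j2] by simp
  also have "\<dots> = (if i = j then 1 else 0)"
    by (auto, metis div_mult_mod_eq)
  finally show ?case .
qed

lemma cyc_idx:
  fixes M k z :: nat
  assumes "k < M" "z < M"
  shows "((z + 1) mod M = M - 1 - k) \<longleftrightarrow> (z = M - 1 - (k + 1) mod M)"
proof (cases "z + 1 = M")
  case True
  then show ?thesis using assms by (cases "k + 1 = M") auto
next
  case False
  then have "(z+1) mod M = z + 1" using assms by simp
  then show ?thesis using assms by (cases "k + 1 = M") auto
qed


context setting begin

lemma Ceq_same:
  assumes "\<And>i. a i = (n, f)" "\<And>i. b i = (n, g)" "eqv d n f g"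
  shows "Ceq d xs a b"
proof -
  have "eqv d n (\<lambda>p i j. f p i j - g p i j) (\<lambda>p i j. 0)" using assms(3) by (simp add: eqv_def)
  then have "\<And>i. ldist d xs (a i) (b i) = 0" using assms(1,2) by (simp add: ldist_same Cnorm_zero[OF Dom_ne])
  then show ?thesis by (simp add: Ceq_def)
qed

definition PP :: "nat \<Rightarrow> nat \<Rightarrow> celt" where
  "PP n k = (\<lambda>i. (n, Ek d n (2 ^ n - 1 - k)))"

lemma PP_Ccar: "PP n k \<in> Ccar d xs"
proof -
  have "eqv d n (\<lambda>p i j. Ek d n (2 ^ n - 1 - k) p i j - Ek d n (2 ^ n - 1 - k) p i j) (\<lambda>p i j. 0)"
    by (simp add: eqv_def)
  then have "ldist d xs (PP n k i) (PP n k j) = 0" for i j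
    by (simp add: PP_def ldist_same Cnorm_zero[OF Dom_ne])
  then show ?thesis by (simp add: Ccar_def lvalid_def PP_def Ek_Cn_car)
qed

lemma PP_proj: "Cproj d xs (PP n k)"
proof -
  have m: "Cmul d xs (PP n k) (PP n k) = (\<lambda>i. (n, \<lambda>p. mmul (rR d n) (Ek d n (2 ^ n - 1 - k) p) (Ek d n (2 ^ n - 1 - k) p)))"
    by (simp add: Cmul_def PP_def lmul_def lbin_same)
  have e1: "eqv d n (\<lambda>p. mmul (rR d n) (Ek d n (2 ^ n - 1 - k) p) (Ek d n (2 ^ n - 1 - k) p)) (Ek d n (2 ^ n - 1 - k))"
    unfolding eqv_def Ek_def by (auto simp: mmul_diag_left)
  have s: "Cstar (PP n k) = (\<lambda>i. (n, \<lambda>p. madj (Ek d n (2 ^ n - 1 - k) p)))"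
    by (simp add: Cstar_def PP_def lstar_def)
  have e2: "eqv d n (\<lambda>p. madj (Ek d n (2 ^ n - 1 - k) p)) (Ek d n (2 ^ n - 1 - k))"
    unfolding eqv_def Ek_def madj_def by auto
  show ?thesis unfolding Cproj_def
    using PP_Ccar Ceq_same[OF _ _ e1, of "Cmul d xs (PP n k) (PP n k)" "PP n k"]
      Ceq_same[OF _ _ e2, of "Cstar (PP n k)" "PP n k"] m s by (simp add: PP_def)
qed

lemma Csum_PP: "Csum d xs (PP n) (Suc m) = (\<lambda>i. (n, \<lambda>p I J. \<Sum>k<Suc m. Ek d n (2 ^ n - 1 - k) p I J))"
proof (induct m)
  case 0
  show ?case by (simp add: Cadd_def Czero_def PP_def ladd_def lbin_def llift_def GamK_zero)
next
  case (Suc m)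
  show ?case using Suc by (simp add: Cadd_def PP_def ladd_def lbin_same)
qed

lemma Csum_one: "Ceq d xs (Csum d xs (PP n) (2 ^ n)) Cone"
proof -
  define M where "M = (2::nat) ^ n"
  have M: "M = Suc (M - 1)" by (simp add: M_def)
  have cs: "Csum d xs (PP n) M = (\<lambda>i. (n, \<lambda>p I J. \<Sum>k<M. Ek d n (M - 1 - k) p I J))"
  proof -
    have "Csum d xs (PP n) (Suc (M - 1)) = (\<lambda>i. (n, \<lambda>p I J. \<Sum>k<Suc (M - 1). Ek d n (2 ^ n - 1 - k) p I J))"
      by (rule Csum_PP)
    moreover have "Suc (M - 1) = M" using M by simp
    ultimately show ?thesis by (simp only: M_def)
  qed
  have e: "eqv d n (\<lambda>p I J. (\<Sum>k<M. Ek d n (M - 1 - k) p I J) - (if I = J then 1 else 0)) (\<lambda>p i j. 0)"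
    unfolding eqv_def
  proof (intro ballI allI impI)
    fix q I J assume q: "q \<in> Dom d n" and I: "I < rR d n" and J: "J < rR d n"
    have z: "snd q < M" using q by (auto simp: Dom_def Zn_def M_def)
    have "(\<Sum>k<M. Ek d n (M - 1 - k) q I J) = (\<Sum>k<M. if k = M - 1 - snd q then (if I = J then 1 else 0) else 0)"
      unfolding Ek_def using z I by (intro sum.cong refl) auto
    also have "\<dots> = (if I = J then 1 else 0)" using z by simp
    finally show "(\<Sum>k<M. Ek d n (M - 1 - k) q I J) - (if I = J then 1 else 0) = 0" by simp
  qed
  have "ldist d xs (Csum d xs (PP n) M i) (Cone i) = 0" for i
  proof -
    have "ldist d xs (Csum d xs (PP n) M i) (Cone i) =
      Cnorm d n (\<lambda>p I J. (\<Sum>k<M. Ek d n (M - 1 - k) p I J) - (if I = J then 1 else 0))"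
      by (simp add: cs Cone_def ldist_def lminus_def lbin_def llift_def GamK_delta lnorm_def)
    then show ?thesis using Cnorm_zero[OF Dom_ne e] by simp
  qed
  then show ?thesis by (simp add: Ceq_def M_def)
qed

lemma alpha_PP:
  assumes k: "k < 2 ^ n"
  shows "CnormC d (Cminus d xs (Calpha d (PP n k)) (PP n ((k + 1) mod 2 ^ n))) = 0"
proof -
  define M where "M = (2::nat) ^ n"
  let ?r = "rR d n" and ?U = "umat d n"
  have e: "eqv d n (\<lambda>p i j. alphan d n (Ek d n (M - 1 - k)) p i j - Ek d n (M - 1 - (k + 1) mod M) p i j) (\<lambda>p i j. 0)"
    unfolding eqv_def
  proof (intro ballI allI impI)
    fix q i j assume q: "q \<in> Dom d n" and i: "i < ?r" and j: "j < ?r"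
    obtain x z where qz: "q = (x, z)" by (cases q)
    have z: "z < M" using q qz by (auto simp: Dom_def Zn_def M_def)
    let ?P = "(z + 1) mod M = M - 1 - k"
    have E': "Ek d n (M - 1 - k) (x, (z + 1) mod M) = (\<lambda>i j. if i = j \<and> i < ?r \<and> ?P then 1 else 0)"
      by (simp add: Ek_def fun_eq_iff)
    have "alphan d n (Ek d n (M - 1 - k)) q i j = (\<Sum>l<?r. mmul ?r ?U (Ek d n (M - 1 - k) (x, (z + 1) mod M)) i l * madj ?U l j)"
      by (simp add: alphan_def qz M_def mmul_def)
    also have "\<dots> = (\<Sum>l<?r. (if ?P then ?U i l else 0) * cnj (?U j l))"
      unfolding E' by (intro sum.cong refl) (simp add: mmul_diag_right madj_def)
    also have "\<dots> = (if ?P then (\<Sum>l<?r. ?U i l * cnj (?U j l)) else 0)" by simp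
    also have "\<dots> = (if ?P \<and> i = j then 1 else 0)" using umat_unitary[OF i j] by (cases "i = j") simp_all
    also have "\<dots> = Ek d n (M - 1 - (k + 1) mod M) q i j"
      using cyc_idx[of k M z] k z i by (auto simp: Ek_def qz M_def)
    finally show "alphan d n (Ek d n (M - 1 - k)) q i j - Ek d n (M - 1 - (k + 1) mod M) q i j = 0" by simp
  qed
  have "lnorm d (Cminus d xs (Calpha d (PP n k)) (PP n ((k + 1) mod 2 ^ n)) i) = 0" for i
  proof -
    have "lnorm d (Cminus d xs (Calpha d (PP n k)) (PP n ((k + 1) mod 2 ^ n)) i)
      = Cnorm d n (\<lambda>p i j. alphan d n (Ek d n (M - 1 - k)) p i j - Ek d n (M - 1 - (k + 1) mod M) p i j)"
      by (simp add: Cminus_def Calpha_def PP_def lminus_def lbin_same lnorm_def M_def)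
    then show ?thesis using Cnorm_zero[OF Dom_ne e] by simp
  qed
  then show ?thesis by (simp add: CnormC_def)
qed

end


definition comm :: "(nat \<Rightarrow> nat) \<Rightarrow> nat \<Rightarrow> cfun \<Rightarrow> cfun \<Rightarrow> cfun" where
  "comm d K f g = (\<lambda>p I J. mmul (rR d K) (f p) (g p) I J - mmul (rR d K) (g p) (f p) I J)"

lemma mmul_minus_right: "mmul r A (\<lambda>i j. B i j - C i j) I J = mmul r A B I J - mmul r A C I J"
  by (simp add: mmul_def sum_subtractf algebra_simps)

lemma mmul_minus_left: "mmul r (\<lambda>i j. B i j - C i j) A I J = mmul r B A I J - mmul r C A I J"
  by (simp add: mmul_def sum_subtractf algebra_simps)

lemma comm_diff: "(\<lambda>p I J. comm d K e X p I J - comm d K e Y p I J) = comm d K e (\<lambda>p i j. X p i j - Y p i j)"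
  by (simp add: comm_def fun_eq_iff mmul_minus_right mmul_minus_left)

lemma eqv_minus: "eqv d n f1 f2 \<Longrightarrow> eqv d n g1 g2 \<Longrightarrow> eqv d n (\<lambda>p i j. f1 p i j - g1 p i j) (\<lambda>p i j. f2 p i j - g2 p i j)"
  by (simp add: eqv_def)

lemma bnd_mul: "bnd d K f \<Longrightarrow> bnd d K g \<Longrightarrow> bnd d K (\<lambda>p. mmul (rR d K) (f p) (g p))"
proof -
  assume "bnd d K f" "bnd d K g"
  then obtain B1 B2 where B1: "\<And>q. q \<in> Dom d K \<Longrightarrow> opnorm (rR d K) (f q) \<le> B1"
    and B2: "\<And>q. q \<in> Dom d K \<Longrightarrow> opnorm (rR d K) (g q) \<le> B2" unfolding bnd_def by blast
  have "opnorm (rR d K) (mmul (rR d K) (f q) (g q)) \<le> B1 * B2" if "q \<in> Dom d K" for q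
    using op_mul[of "rR d K" "f q" "g q"] mult_mono[OF B1[OF that] B2[OF that]]
      order_trans[OF op_nonneg B1[OF that]] by simp
  then show ?thesis unfolding bnd_def by blast
qed

lemma bnd_minus: "bnd d K f \<Longrightarrow> bnd d K g \<Longrightarrow> bnd d K (\<lambda>p i j. f p i j - g p i j)"
proof -
  assume "bnd d K f" "bnd d K g"
  then obtain B1 B2 where B1: "\<And>q. q \<in> Dom d K \<Longrightarrow> opnorm (rR d K) (f q) \<le> B1"
    and B2: "\<And>q. q \<in> Dom d K \<Longrightarrow> opnorm (rR d K) (g q) \<le> B2" unfolding bnd_def by blast
  have "opnorm (rR d K) (\<lambda>i j. f q i j - g q i j) \<le> B1 + B2" if "q \<in> Dom d K" for q
    using op_diff[of "rR d K" "f q" "g q"] B1[OF that] B2[OF that] by simp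
  then show ?thesis unfolding bnd_def by blast
qed

lemma bnd_comm: "bnd d K f \<Longrightarrow> bnd d K g \<Longrightarrow> bnd d K (comm d K f g)"
  unfolding comm_def by (intro bnd_minus bnd_mul)

lemma Cnorm_nonneg: "Dom d n \<noteq> {} \<Longrightarrow> bnd d n f \<Longrightarrow> 0 \<le> Cnorm d n f"
  using Cnorm_upper[of d n f] op_nonneg by (meson ex_in_conv order_trans)

context setting begin

lemma GamK_trans: "n \<le> K0 \<Longrightarrow> K0 \<le> K \<Longrightarrow> GamK d xs K0 (K - K0) (GamK d xs n (K0 - n) f) = GamK d xs n (K - n) f"
  using GamK_add[of d xs n "K0 - n" "K - K0" f] by simp

lemma GamK_Cnorm': "K0 \<le> K \<Longrightarrow> bnd d K0 h \<Longrightarrow> bnd d K (GamK d xs K0 (K - K0) h) \<and> Cnorm d K (GamK d xs K0 (K - K0) h) = Cnorm d K0 h"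
  using GamK_Cnorm[of K0 h "K - K0"] by simp

lemma GamK_mul': "K0 \<le> K \<Longrightarrow> eqv d K (GamK d xs K0 (K - K0) (\<lambda>p. mmul (rR d K0) (f p) (g p)))
               (\<lambda>p. mmul (rR d K) (GamK d xs K0 (K - K0) f p) (GamK d xs K0 (K - K0) g p))"
  using GamK_mul[of K0 "K - K0" f g] by simp

lemma GamK_comm:
  assumes "n \<le> K0" "l \<le> K0" "K0 \<le> K"
  shows "eqv d K (GamK d xs K0 (K - K0) (comm d K0 (GamK d xs n (K0 - n) e) (GamK d xs l (K0 - l) f)))
                 (comm d K (GamK d xs n (K - n) e) (GamK d xs l (K - l) f))"
proof -
  have "eqv d K (GamK d xs K0 (K - K0) (comm d K0 (GamK d xs n (K0 - n) e) (GamK d xs l (K0 - l) f)))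
     (\<lambda>p i j. mmul (rR d K) (GamK d xs K0 (K - K0) (GamK d xs n (K0 - n) e) p) (GamK d xs K0 (K - K0) (GamK d xs l (K0 - l) f) p) i j
           - mmul (rR d K) (GamK d xs K0 (K - K0) (GamK d xs l (K0 - l) f) p) (GamK d xs K0 (K - K0) (GamK d xs n (K0 - n) e) p) i j)"
    unfolding comm_def GamK_minus
    by (intro eqv_minus GamK_mul'[OF assms(3)])
  then show ?thesis unfolding comm_def using GamK_trans assms by simp
qed

lemma Cnorm_diff:
  assumes A: "bnd d K A" and B: "bnd d K B"
  shows "\<bar>Cnorm d K A - Cnorm d K B\<bar> \<le> Cnorm d K (\<lambda>p i j. A p i j - B p i j)"
proof -
  have ab: "bnd d K (\<lambda>p i j. A p i j - B p i j)" by (rule bnd_minus[OF A B])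
  have sym: "Cnorm d K (\<lambda>p i j. B p i j - A p i j) = Cnorm d K (\<lambda>p i j. A p i j - B p i j)"
    unfolding Cnorm_SUP by (intro SUP_cong refl) (rule op_diff_sym)
  have ba: "bnd d K (\<lambda>p i j. B p i j - A p i j)" by (rule bnd_minus[OF B A])
  have gen: "Cnorm d K X \<le> Cnorm d K Y + Cnorm d K (\<lambda>p i j. X p i j - Y p i j)"
    if X: "bnd d K X" and Y: "bnd d K Y" and XY: "bnd d K (\<lambda>p i j. X p i j - Y p i j)" for X Y
  proof (rule Cnorm_least[OF Dom_ne])
    fix q assume q: "q \<in> Dom d K"
    have "opnorm (rR d K) (X q) = opnorm (rR d K) (\<lambda>i j. Y q i j + (X q i j - Y q i j))"
      by (rule op_cong) simp
    also have "\<dots> \<le> opnorm (rR d K) (Y q) + opnorm (rR d K) (\<lambda>i j. X q i j - Y q i j)" by (rule op_add)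
    also have "\<dots> \<le> Cnorm d K Y + Cnorm d K (\<lambda>p i j. X p i j - Y p i j)"
      using Cnorm_upper[OF Y q] Cnorm_upper[OF XY q] by simp
    finally show "opnorm (rR d K) (X q) \<le> Cnorm d K Y + Cnorm d K (\<lambda>p i j. X p i j - Y p i j)" .
  qed
  show ?thesis using gen[OF A B ab] gen[OF B A ba] sym by linarith
qed

lemma comm_bound:
  assumes e: "opnorm (rR d K) (e q) \<le> 1"
  shows "opnorm (rR d K) (comm d K e X q) \<le> 2 * opnorm (rR d K) (X q)"
proof -
  have "opnorm (rR d K) (comm d K e X q) \<le> opnorm (rR d K) (mmul (rR d K) (e q) (X q)) + opnorm (rR d K) (mmul (rR d K) (X q) (e q))"
    unfolding comm_def by (rule op_diff)
  also have "\<dots> \<le> opnorm (rR d K) (e q) * opnorm (rR d K) (X q) + opnorm (rR d K) (X q) * opnorm (rR d K) (e q)"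
    by (intro add_mono op_mul)
  also have "\<dots> \<le> 1 * opnorm (rR d K) (X q) + opnorm (rR d K) (X q) * 1"
    by (intro add_mono mult_right_mono mult_left_mono e) simp_all
  finally show ?thesis by simp
qed

definition Tt :: "nat \<Rightarrow> cfun \<Rightarrow> lelt \<Rightarrow> real" where
  "Tt n e x = lnorm d (lminus d xs (lmul d xs (n, e) x) (lmul d xs x (n, e)))"

lemma Tt_eq: "Tt n e (l, f) = Cnorm d (max n l) (comm d (max n l) (GamK d xs n (max n l - n) e) (GamK d xs l (max n l - l) f))"
  by (simp add: Tt_def lmul_def lbin_def llift_def lminus_def lnorm_def comm_def max.commute Let_def)

lemma Tt_lift:
  assumes e: "bnd d n e" and f: "bnd d l f" and K: "max n l \<le> K"
  shows "Tt n e (l, f) = Cnorm d K (comm d K (GamK d xs n (K - n) e) (GamK d xs l (K - l) f))"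
proof -
  let ?K0 = "max n l"
  have b: "bnd d ?K0 (comm d ?K0 (GamK d xs n (?K0 - n) e) (GamK d xs l (?K0 - l) f))"
    using GamK_Cnorm'[OF _ e, of ?K0] GamK_Cnorm'[OF _ f, of ?K0] by (intro bnd_comm) auto
  have "Tt n e (l, f) = Cnorm d K (GamK d xs ?K0 (K - ?K0) (comm d ?K0 (GamK d xs n (?K0 - n) e) (GamK d xs l (?K0 - l) f)))"
    using GamK_Cnorm'[OF K b] Tt_eq by simp
  also have "\<dots> = Cnorm d K (comm d K (GamK d xs n (K - n) e) (GamK d xs l (K - l) f))"
    by (rule Cnorm_eqv[OF GamK_comm]) (use K in auto)
  finally show ?thesis .
qed

lemma Tt_diff:
  assumes e: "bnd d n e" and e1: "\<And>q. q \<in> Dom d n \<Longrightarrow> opnorm (rR d n) (e q) \<le> 1"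
    and x: "lvalid d x" and y: "lvalid d y"
  shows "\<bar>Tt n e x - Tt n e y\<bar> \<le> 2 * ldist d xs x y"
proof -
  obtain lx fx where xx: "x = (lx, fx)" by (cases x)
  obtain ly fy where yy: "y = (ly, fy)" by (cases y)
  have fx: "bnd d lx fx" using x xx by (simp add: lvalid_def Cn_car_bnd)
  have fy: "bnd d ly fy" using y yy by (simp add: lvalid_def Cn_car_bnd)
  define K where "K = max n (max lx ly)"
  define K' where "K' = max lx ly"
  let ?e = "GamK d xs n (K - n) e" and ?X = "GamK d xs lx (K - lx) fx" and ?Y = "GamK d xs ly (K - ly) fy"
  have be: "bnd d K ?e" and bX: "bnd d K ?X" and bY: "bnd d K ?Y"
    using GamK_Cnorm'[OF _ e, of K] GamK_Cnorm'[OF _ fx, of K] GamK_Cnorm'[OF _ fy, of K] by (auto simp: K_def)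
  have Cne: "Cnorm d K ?e = Cnorm d n e" using GamK_Cnorm'[OF _ e, of K] by (simp add: K_def)
  have e1K: "opnorm (rR d K) (?e q) \<le> 1" if "q \<in> Dom d K" for q
  proof -
    have "opnorm (rR d K) (?e q) \<le> Cnorm d K ?e" by (rule Cnorm_upper[OF be that])
    also have "\<dots> \<le> 1" unfolding Cne by (rule Cnorm_least[OF Dom_ne e1])
    finally show ?thesis .
  qed
  have Tx: "Tt n e x = Cnorm d K (comm d K ?e ?X)" unfolding xx by (rule Tt_lift[OF e fx]) (simp add: K_def)
  have Ty: "Tt n e y = Cnorm d K (comm d K ?e ?Y)" unfolding yy by (rule Tt_lift[OF e fy]) (simp add: K_def)
  have bK': "bnd d K' (\<lambda>p i j. GamK d xs lx (K' - lx) fx p i j - GamK d xs ly (K' - ly) fy p i j)"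
    using GamK_Cnorm'[OF _ fx, of K'] GamK_Cnorm'[OF _ fy, of K'] by (intro bnd_minus) (auto simp: K'_def)
  have "ldist d xs x y = Cnorm d K' (\<lambda>p i j. GamK d xs lx (K' - lx) fx p i j - GamK d xs ly (K' - ly) fy p i j)"
    by (simp add: xx yy ldist_def lminus_def lbin_def llift_def lnorm_def K'_def Let_def)
  also have "\<dots> = Cnorm d K (GamK d xs K' (K - K') (\<lambda>p i j. GamK d xs lx (K' - lx) fx p i j - GamK d xs ly (K' - ly) fy p i j))"
    using GamK_Cnorm'[OF _ bK', of K] by (simp add: K_def K'_def)
  also have "\<dots> = Cnorm d K (\<lambda>p i j. ?X p i j - ?Y p i j)"
    unfolding GamK_minus using GamK_trans[of lx K' K fx] GamK_trans[of ly K' K fy] by (simp add: K_def K'_def)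
  finally have ld: "ldist d xs x y = Cnorm d K (\<lambda>p i j. ?X p i j - ?Y p i j)" .
  have bXY: "bnd d K (\<lambda>p i j. ?X p i j - ?Y p i j)" by (rule bnd_minus[OF bX bY])
  have "\<bar>Tt n e x - Tt n e y\<bar> \<le> Cnorm d K (\<lambda>p i j. comm d K ?e ?X p i j - comm d K ?e ?Y p i j)"
    unfolding Tx Ty by (rule Cnorm_diff) (intro bnd_comm be bX bY)+
  also have "\<dots> = Cnorm d K (comm d K ?e (\<lambda>p i j. ?X p i j - ?Y p i j))" by (simp only: comm_diff)
  also have "\<dots> \<le> 2 * Cnorm d K (\<lambda>p i j. ?X p i j - ?Y p i j)"
  proof (rule Cnorm_least[OF Dom_ne])
    fix q assume q: "q \<in> Dom d K"
    have "opnorm (rR d K) (comm d K ?e (\<lambda>p i j. ?X p i j - ?Y p i j) q) \<le> 2 * opnorm (rR d K) ((\<lambda>p i j. ?X p i j - ?Y p i j) q)"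
      by (intro comm_bound e1K q)
    also have "\<dots> \<le> 2 * Cnorm d K (\<lambda>p i j. ?X p i j - ?Y p i j)"
      using Cnorm_upper[OF bXY q] by simp
    finally show "opnorm (rR d K) (comm d K ?e (\<lambda>p i j. ?X p i j - ?Y p i j) q) \<le> 2 * Cnorm d K (\<lambda>p i j. ?X p i j - ?Y p i j)" .
  qed
  finally show ?thesis unfolding ld .
qed

lemma Tt_zero:
  assumes central: "\<And>q G i j. q \<in> Dom d n \<Longrightarrow> i < rR d n \<Longrightarrow> j < rR d n \<Longrightarrow>
      mmul (rR d n) (e q) G i j = mmul (rR d n) G (e q) i j"
    and x: "fst x \<le> n"
  shows "Tt n e x = 0"
proof -
  obtain l f where xx: "x = (l, f)" by (cases x)
  have "eqv d n (comm d n e (GamK d xs l (n - l) f)) (\<lambda>p i j. 0)"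
    unfolding eqv_def comm_def using central by simp
  then show ?thesis using x unfolding xx Tt_eq by (simp add: max_def Cnorm_zero[OF Dom_ne])
qed

lemma comm_lim:
  assumes e: "bnd d n e" and e1: "\<And>q. q \<in> Dom d n \<Longrightarrow> opnorm (rR d n) (e q) \<le> 1"
    and central: "\<And>q G i j. q \<in> Dom d n \<Longrightarrow> i < rR d n \<Longrightarrow> j < rR d n \<Longrightarrow>
      mmul (rR d n) (e q) G i j = mmul (rR d n) G (e q) i j"
    and a: "a \<in> Ccar d xs"
    and N0: "\<And>i j. N0 \<le> i \<Longrightarrow> N0 \<le> j \<Longrightarrow> ldist d xs (a i) (a j) < \<delta>"
    and lev: "fst (a N0) \<le> n"
  shows "CnormC d (Cminus d xs (Cmul d xs (\<lambda>i. (n, e)) a) (Cmul d xs a (\<lambda>i. (n, e)))) \<le> 2 * \<delta>"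
proof -
  have val: "\<And>i. lvalid d (a i)" using a by (simp add: Ccar_def)
  have cau: "\<And>\<epsilon>. \<epsilon> > 0 \<Longrightarrow> \<exists>N. \<forall>i\<ge>N. \<forall>j\<ge>N. ldist d xs (a i) (a j) < \<epsilon>" using a by (simp add: Ccar_def)
  define T where "T = (\<lambda>i. Tt n e (a i))"
  have C: "CnormC d (Cminus d xs (Cmul d xs (\<lambda>i. (n, e)) a) (Cmul d xs a (\<lambda>i. (n, e)))) = lim T"
    by (simp add: CnormC_def Cminus_def Cmul_def T_def Tt_def)
  have dT: "\<bar>T i - T j\<bar> \<le> 2 * ldist d xs (a i) (a j)" for i j
    unfolding T_def by (rule Tt_diff[OF e e1 val val])
  have "Cauchy T"
  proof (rule CauchyI)
    fix \<epsilon> :: real assume "0 < \<epsilon>"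
    then obtain N where N: "\<forall>i\<ge>N. \<forall>j\<ge>N. ldist d xs (a i) (a j) < \<epsilon>/2" using cau[of "\<epsilon>/2"] by auto
    have "norm (T i - T j) < \<epsilon>" if "i \<ge> N" "j \<ge> N" for i j
      using dT[of i j] N that by fastforce
    then show "\<exists>M. \<forall>m\<ge>M. \<forall>n\<ge>M. norm (T m - T n) < \<epsilon>" by blast
  qed
  then have lim: "T \<longlonglongrightarrow> lim T" by (simp add: Cauchy_convergent_iff convergent_LIMSEQ_iff)
  have T0: "T N0 = 0" unfolding T_def by (rule Tt_zero[OF central lev])
  have "\<forall>i\<ge>N0. T i \<le> 2 * \<delta>"
  proof (intro allI impI)
    fix i assume "N0 \<le> i"
    then have "ldist d xs (a i) (a N0) < \<delta>" using N0 by simp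
    then show "T i \<le> 2 * \<delta>" using dT[of i N0] T0 by linarith
  qed
  then have "lim T \<le> 2 * \<delta>" by (intro LIMSEQ_le_const2[OF lim]) blast
  then show ?thesis unfolding C .
qed

end


theorem mainTheorem4:
  fixes d :: "nat \<Rightarrow> nat" and xs :: "nat \<Rightarrow> (nat \<Rightarrow> real^3)"
  assumes d0: "d 0 = 1"
    and dgrow: "\<And>n. n \<ge> 1 \<Longrightarrow> d n > 2 ^ (n - 1)"
    and kappa: "kappa d > 1/2"
    and xs_in: "\<And>m. xs m \<in> Xsp d m"
    and dense: "\<And>n. Xsp d n \<subseteq> closure
        {iterK d n k nu (xs (n + k)) | k nu. k \<ge> 1 \<and> (\<forall>j\<in>{1..k}. nu j \<in> {1..d (n + j)})}"
  shows "\<forall>F \<epsilon> N. finite F \<and> F \<subseteq> Ccar d xs \<and> \<epsilon> > 0 \<longrightarrow>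
    (\<exists>m p. m \<ge> N \<and> (\<exists>t. m = 2 ^ t) \<and>
       (\<forall>k<m. Cproj d xs (p k)) \<and>
       Ceq d xs (Csum d xs p m) Cone \<and>
       (\<forall>k<m. CnormC d (Cminus d xs (Calpha d (p k)) (p ((k + 1) mod m))) < \<epsilon>) \<and>
       (\<forall>k<m. \<forall>a\<in>F. CnormC d (Cminus d xs (Cmul d xs (p k) a) (Cmul d xs a (p k))) < \<epsilon>))"
proof (intro allI impI)
  fix F :: "celt set" and \<epsilon> :: real and N :: nat
  assume H: "finite F \<and> F \<subseteq> Ccar d xs \<and> \<epsilon> > 0"
  then have fin: "finite F" and FC: "F \<subseteq> Ccar d xs" and ep: "\<epsilon> > 0" by auto
  have dpos: "0 < d n" for n
  proof (cases n)
    case 0 then show ?thesis using d0 by simp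
  next
    case (Suc k) then show ?thesis using dgrow[of n] by simp
  qed
  interpret S: setting d xs by unfold_locales (auto intro: xs_in dpos)
  define \<delta> where "\<delta> = \<epsilon> / 3"
  have dp: "\<delta> > 0" using ep by (simp add: \<delta>_def)
  have "\<forall>a\<in>F. \<exists>Na. \<forall>i\<ge>Na. \<forall>j\<ge>Na. ldist d xs (a i) (a j) < \<delta>"
    using FC dp by (auto simp: Ccar_def)
  then obtain Nf where Nf: "\<And>a i j. a \<in> F \<Longrightarrow> Nf a \<le> i \<Longrightarrow> Nf a \<le> j \<Longrightarrow> ldist d xs (a i) (a j) < \<delta>"
    by metis
  define n where "n = N + (\<Sum>a\<in>F. fst (a (Nf a)))"
  have lev: "fst (a (Nf a)) \<le> n" if "a \<in> F" for a
    using member_le_sum[of a F "\<lambda>a. fst (a (Nf a))"] that fin by (simp add: n_def)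
  have mN: "N \<le> 2 ^ n"
  proof -
    have "N \<le> n" by (simp add: n_def)
    moreover have "n < 2 ^ n" by (rule less_exp)
    ultimately show ?thesis by linarith
  qed
  show "\<exists>m p. m \<ge> N \<and> (\<exists>t. m = 2 ^ t) \<and>
       (\<forall>k<m. Cproj d xs (p k)) \<and>
       Ceq d xs (Csum d xs p m) Cone \<and>
       (\<forall>k<m. CnormC d (Cminus d xs (Calpha d (p k)) (p ((k + 1) mod m))) < \<epsilon>) \<and>
       (\<forall>k<m. \<forall>a\<in>F. CnormC d (Cminus d xs (Cmul d xs (p k) a) (Cmul d xs a (p k))) < \<epsilon>)"
  proof (rule exI[of _ "2 ^ n"], rule exI[of _ "S.PP n"], intro conjI allI impI ballI)
    show "N \<le> 2 ^ n" by (rule mN)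
    show "\<exists>t. (2::nat) ^ n = 2 ^ t" by blast
    show "Cproj d xs (S.PP n k)" for k by (rule S.PP_proj)
    show "Ceq d xs (Csum d xs (S.PP n) (2 ^ n)) Cone" by (rule S.Csum_one)
    show "CnormC d (Cminus d xs (Calpha d (S.PP n k)) (S.PP n ((k + 1) mod 2 ^ n))) < \<epsilon>"
      if "k < 2 ^ n" for k using S.alpha_PP[OF that] ep by simp
    fix k :: nat and a assume k: "k < 2 ^ n" and a: "a \<in> F"
    let ?e = "Ek d n (2 ^ n - 1 - k)"
    have e1: "opnorm (rR d n) (?e q) \<le> 1" for q by (rule Ek_op_le)
    have eb: "bnd d n ?e" unfolding bnd_def using e1 by blast
    have central: "mmul (rR d n) (?e q) G i j = mmul (rR d n) G (?e q) i j"
      if "i < rR d n" "j < rR d n" for q G i j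
      unfolding Ek_def using mmul_diag_left[OF that, of "snd q = 2 ^ n - 1 - k" G]
        mmul_diag_right[OF that(2), of G "snd q = 2 ^ n - 1 - k" i] by simp
    have "CnormC d (Cminus d xs (Cmul d xs (\<lambda>i. (n, ?e)) a) (Cmul d xs a (\<lambda>i. (n, ?e)))) \<le> 2 * \<delta>"
      by (rule S.comm_lim[OF eb e1 central]) (use FC a Nf lev in auto)
    then show "CnormC d (Cminus d xs (Cmul d xs (S.PP n k) a) (Cmul d xs a (S.PP n k))) < \<epsilon>"
      using ep unfolding S.PP_def \<delta>_def by simp
  qed
qed


end
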